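(* Let $G$ be a distance-regular graph with degree $k$, parameter $\lambda>0$, and least adjacency eigenvalue $s$. Then \[ \lambda + \frac{k}{\lambda} > \frac{k}{|s|}. \]
   Context: A connected graph is distance-regular if for any two vertices $u,v$ at distance $i$, the numbers of neighbors of $v$ at distance $i-1$, $i$, and $i+1$ from $u$ depend only on $i$. Here $k$ is the degree, $\lambda$ is the number of common neighbors of two adjacent vertices, and $s$ is the least eigenvalue of the adjacency matrix ($s<0$). *)

theory Defs
  imports "HOL-Analysis.Analysis"
begin

definition simple_graph :: "('a \<Rightarrow> 'a \<Rightarrow> bool) \<Rightarrow> bool" where
  "simple_graph E \<longleftrightarrow> (\<forall>u v. E u v \<longrightarrow> E v u) \<and> (\<forall>u. \<not> E u u)"

definition connected_graph :: "('a \<Rightarrow> 'a \<Rightarrow> bool) \<Rightarrow> bool" where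
  "connected_graph E \<longleftrightarrow> (\<forall>u v. \<exists>n. (E ^^ n) u v)"

definition gdist :: "('a \<Rightarrow> 'a \<Rightarrow> bool) \<Rightarrow> 'a \<Rightarrow> 'a \<Rightarrow> nat" where
  "gdist E u v = (LEAST n. (E ^^ n) u v)"

definition distance_regular :: "('a::finite \<Rightarrow> 'a \<Rightarrow> bool) \<Rightarrow> bool" where
  "distance_regular E \<longleftrightarrow> simple_graph E \<and> connected_graph E \<and>
    (\<forall>u v x y. gdist E u v = gdist E x y \<longrightarrow>
       (\<forall>j::int. j \<in> {-1, 0, 1} \<longrightarrow>
          card {w. E v w \<and> int (gdist E u w) = int (gdist E u v) + j}
        = card {w. E y w \<and> int (gdist E x w) = int (gdist E x y) + j}))"

definition adj_matrix :: "('a::finite \<Rightarrow> 'a \<Rightarrow> bool) \<Rightarrow> real^'a^'a" where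
  "adj_matrix E = (\<chi> i j. if E i j then 1 else 0)"

definition is_eigenvalue :: "real^'n^'n \<Rightarrow> real \<Rightarrow> bool" where
  "is_eigenvalue A t \<longleftrightarrow> (\<exists>x. x \<noteq> 0 \<and> A *v x = t *\<^sub>R x)"

definition least_eigenvalue :: "real^'n^'n \<Rightarrow> real \<Rightarrow> bool" where
  "least_eigenvalue A s \<longleftrightarrow> is_eigenvalue A s \<and> (\<forall>t. is_eigenvalue A t \<longrightarrow> s \<le> t)"

end

theory Submission
  imports Defs
begin

lemma symf: fixes A :: "real^'n^'n" assumes sym: "\<And>i j. A$i$j = A$j$i"
  shows "y \<bullet> (A *v x) = x \<bullet> (A *v y)"
  unfolding inner_vec_def matrix_vector_mult_def
  apply (simp add: sum_distrib_left mult_ac)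
  apply (subst sum.swap) apply (simp add: sym mult_ac)
  done

lemma min_eig: fixes A :: "real^'n^'n" assumes sym: "\<And>i j. A$i$j = A$j$i"
  shows "\<exists>m x0. x0 \<noteq> 0 \<and> A *v x0 = m *\<^sub>R x0 \<and> (\<forall>y. m * (y \<bullet> y) \<le> y \<bullet> (A *v y))"
proof -
  define q where "q = (\<lambda>x::real^'n. x \<bullet> (A *v x))"
  have cont: "continuous_on (sphere 0 1) q" unfolding q_def by (intro continuous_intros)
  obtain x0 where x0: "x0 \<in> sphere 0 1" and mn: "\<And>y. y \<in> sphere 0 1 \<Longrightarrow> q x0 \<le> q y"
    using continuous_attains_inf[OF compact_sphere _ cont] by auto
  define m where "m = q x0"
  have x0x0: "x0 \<bullet> x0 = 1" using x0 by (simp add: dot_square_norm)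
  have qs: "q (c *\<^sub>R y) = c^2 * q y" for c y
    by (simp add: q_def matrix_vector_mult_scaleR power2_eq_square)
  have ge: "m * (y \<bullet> y) \<le> q y" for y
  proof (cases "y = 0")
    case True then show ?thesis by (simp add: q_def)
  next
    case False
    define z where "z = (1 / norm y) *\<^sub>R y"
    have "z \<in> sphere 0 1" using False by (simp add: z_def)
    then have "m \<le> q z" using mn m_def by auto
    also have "q z = q y / (norm y)^2" by (simp add: z_def qs power_divide)
    finally have "m * (norm y)^2 \<le> q y" using False by (simp add: field_simps)
    then show ?thesis by (simp add: dot_square_norm)
  qed
  define B where "B = (\<lambda>x. A *v x - m *\<^sub>R x)"
  have Bpos: "0 \<le> y \<bullet> B y" for y using ge[of y] by (simp add: B_def q_def inner_diff_right algebra_simps)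
  have B0: "x0 \<bullet> B x0 = 0" by (simp add: B_def q_def m_def inner_diff_right x0x0)
  have Blin: "B (x + t *\<^sub>R y) = B x + t *\<^sub>R B y" for x y t
    by (simp add: B_def matrix_vector_right_distrib matrix_vector_mult_scaleR algebra_simps)
  have Bsym: "y \<bullet> B x = x \<bullet> B y" for x y
    by (simp add: B_def inner_diff_right symf[OF sym] inner_commute)
  define w where "w = B x0"
  define c where "c = w \<bullet> w"
  define d where "d = w \<bullet> B w"
  have d0: "d \<ge> 0" using Bpos d_def by auto
  have key: "0 \<le> 2 * t * c + t^2 * d" for t
  proof -
    have "0 \<le> (x0 + t *\<^sub>R w) \<bullet> B (x0 + t *\<^sub>R w)" by (rule Bpos)
    also have "\<dots> = x0 \<bullet> B x0 + t * (x0 \<bullet> B w) + t * (w \<bullet> B x0) + t^2 * (w \<bullet> B w)"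
      by (simp add: Blin inner_add_left inner_add_right power2_eq_square algebra_simps)
    also have "\<dots> = 2 * t * c + t^2 * d"
      using B0 Bsym[of x0 w] by (simp add: c_def d_def w_def)
    finally show ?thesis .
  qed
  have "c = 0"
  proof -
    have "0 \<le> 2 * (-c/(d+1)) * c + (-c/(d+1))^2 * d" by (rule key)
    then have "0 \<le> (2 * (-c/(d+1)) * c + (-c/(d+1))^2 * d) * (d+1)^2" using d0 by simp
    also have "\<dots> = 2 * (-c) * c * (d+1) + c^2 * d"
      using d0 by (simp add: power2_eq_square divide_simps)
    also have "\<dots> = -(c^2 * (d + 2))" by (simp add: algebra_simps power2_eq_square)
    finally have "c^2 * (d+2) \<le> 0" by simp
    then have "c^2 \<le> 0" using d0 by (smt (verit) mult_pos_pos zero_less_power2 power2_eq_square)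
    then show ?thesis by simp
  qed
  then have "w = 0" by (simp add: c_def)
  then have "A *v x0 = m *\<^sub>R x0" by (simp add: w_def B_def)
  moreover have "x0 \<noteq> 0" using x0 by auto
  ultimately show ?thesis using ge q_def by blast
qed
theorem lemma13:
  fixes E :: "'a::finite \<Rightarrow> 'a \<Rightarrow> bool" and k lam :: nat and s :: real
  assumes "distance_regular E"
    and "\<forall>v. card {w. E v w} = k"
    and "\<forall>u v. E u v \<longrightarrow> card {w. E u w \<and> E v w} = lam"
    and "lam > 0"
    and "least_eigenvalue (adj_matrix E) s"
  shows "real lam + real k / real lam > real k / \<bar>s\<bar>"
proof (cases "k = 0")
  case True then show ?thesis using assms(4) by simp
next
  case False
  have sg: "\<And>u v. E u v \<Longrightarrow> E v u" "\<And>u. \<not> E u u"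
    using assms(1) unfolding distance_regular_def simple_graph_def by auto
  define A where "A = adj_matrix E"
  have Aij: "A$i$j = (if E i j then 1 else 0)" for i j by (simp add: A_def adj_matrix_def)
  have sym: "A$i$j = A$j$i" for i j using sg(1) by (auto simp: Aij)
  obtain m x0 where x0: "x0 \<noteq> 0" "A *v x0 = m *\<^sub>R x0" and mge: "\<And>y. m * (y \<bullet> y) \<le> y \<bullet> (A *v y)"
    using min_eig[OF sym] by blast
  have "is_eigenvalue A m" unfolding is_eigenvalue_def using x0 by blast
  then have sm: "s \<le> m" using assms(5) unfolding least_eigenvalue_def A_def by blast
  define L where "L = real lam"
  define K where "K = real k"
  have Lp: "L > 0" using assms(4) L_def by simp
  have Kp: "K > 0" using False K_def by simp
  define a where "a = L + K / L"
  obtain u :: 'a where True by blast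
  define x where "x = ((\<chi> i. (if i = u then a else 0) - (if E u i then 1 else 0)) :: real^'a)"
  have cnt: "(\<Sum>j\<in>UNIV. if P j then 1 else 0) = real (card {j::'a. P j})" for P
    by (simp add: sum.If_cases)
  have Ax: "(A *v x)$i = (if E i u then a else 0) - real (card {j. E i j \<and> E u j})" for i
  proof -
    have "(A *v x)$i = (\<Sum>j\<in>UNIV. (if E i j then 1 else 0) * ((if j = u then a else 0) - (if E u j then 1 else 0)))"
      by (simp add: matrix_vector_mult_def Aij x_def)
    also have "\<dots> = (\<Sum>j\<in>UNIV. (if j = u then (if E i j then a else 0) else 0)) - (\<Sum>j\<in>UNIV. if E i j \<and> E u j then 1 else 0)"
      by (simp only: sum_subtractf[symmetric]) (rule sum.cong, auto)
    also have "\<dots> = (if E i u then a else 0) - real (card {j. E i j \<and> E u j})"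
      by (simp only: cnt) simp
    finally show ?thesis .
  qed
  have Axu: "(A *v x)$u = - K"
    using Ax[of u] sg(2)[of u] assms(2) K_def by simp
  have Axn: "(A *v x)$i = a - L" if "E u i" for i
  proof -
    have "{j. E i j \<and> E u j} = {w. E u w \<and> E i w}" by auto
    then show ?thesis using Ax[of i] sg(1)[OF that] assms(3) that L_def by simp
  qed
  have xAx: "x \<bullet> (A *v x) = K * L - 2 * a * K"
  proof -
    have "x \<bullet> (A *v x) = (\<Sum>i\<in>UNIV. (if i = u then a * (A *v x)$i else 0)) - (\<Sum>i\<in>UNIV. if E u i then (A *v x)$i else 0)"
    proof -
      have xi: "x$i = (if i = u then a else 0) - (if E u i then 1 else 0)" for i by (simp add: x_def)
      have "x \<bullet> (A *v x) = (\<Sum>i\<in>UNIV. x$i * (A *v x)$i)" by (simp add: inner_vec_def)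
      also have "\<dots> = (\<Sum>i\<in>UNIV. (if i = u then a * (A *v x)$i else 0) - (if E u i then (A *v x)$i else 0))"
        by (rule sum.cong) (auto simp: xi left_diff_distrib)
      finally show ?thesis by (simp only: sum_subtractf)
    qed
    also have "(\<Sum>i\<in>UNIV. if E u i then (A *v x)$i else 0) = (\<Sum>i\<in>{i. E u i}. a - L)"
      by (simp add: sum.If_cases Axn)
    also have "\<dots> = K * (a - L)" using assms(2) K_def by simp
    finally show ?thesis using Axu by (simp add: algebra_simps)
  qed
  have xx: "x \<bullet> x = a^2 + K"
  proof -
    have "x \<bullet> x = (\<Sum>i\<in>UNIV. (if i = u then a^2 else 0) + (if E u i then 1 else 0))"
      using sg(2)[of u] by (auto simp: inner_vec_def x_def power2_eq_square intro!: sum.cong)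
    also have "\<dots> = a^2 + K" by (simp add: sum.distrib cnt assms(2) K_def)
    finally show ?thesis .
  qed
  have xxp: "x \<bullet> x \<ge> 0" by simp
  have ineq: "s * (a^2 + K) \<le> K * L - 2 * a * K"
    using mult_right_mono[OF sm xxp] mge[of x] xAx xx by simp
  have ap: "a > 0" using Lp Kp a_def by (simp add: add_pos_pos)
  have "a * (a - L) = K + (K/L)^2" unfolding a_def using Lp by (simp add: field_simps power2_eq_square)
  moreover have "a*(2*a-L) = a^2 + a*(a-L)" by (simp add: algebra_simps power2_eq_square)
  moreover have "(K/L)^2 > 0" using Kp Lp by simp
  ultimately have key: "a * (2*a - L) > a^2 + K" by linarith
  have aK: "a^2 + K > 0" using Kp by (simp add: add_nonneg_pos)
  have KL: "K / L > 0" using Kp Lp by simp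
  have "L - 2*a = -L - 2*(K/L)" by (simp add: a_def)
  then have "L - 2*a < 0" using KL Lp by linarith
  then have "K * (L - 2*a) < 0" by (rule mult_pos_neg[OF Kp])
  then have "s * (a^2+K) < 0" using ineq by (simp add: algebra_simps)
  then have sneg: "s < 0" using aK by (simp add: mult_less_0_iff)
  have h1: "K * (2*a - L) \<le> (-s) * (a^2+K)" using ineq by (simp add: algebra_simps)
  have "a * (K * (2*a - L)) \<le> a * ((-s) * (a^2+K))" using mult_left_mono[OF h1] ap by simp
  moreover have "K * (a^2+K) < K * (a * (2*a - L))" using mult_strict_left_mono[OF key Kp] .
  ultimately have "(a * (-s)) * (a^2+K) > K * (a^2+K)" by (simp add: algebra_simps)
  then have "a * (-s) > K" using aK mult_less_cancel_right_pos by blast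
  then have "K < a * (-s)" by simp
  moreover have "-s > 0" using sneg by simp
  ultimately have "K / (-s) < a" using pos_divide_less_eq[of "-s" K a] by blast
  then show ?thesis using sneg by (simp add: a_def K_def L_def)
qed

end
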